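(* For every positive integer $s$, $K_{3}^{RT}(3,s,3s-2)\le 5$.
   Context: For positive integers $m,s$, the RT poset $[m\times s]$ is the set $\{1,\ldots,ms\}$ partitioned into $m$ blocks $B_i=\{is+1,\ldots,(i+1)s\}$; each block is a chain under the usual order of the integers, and elements of different blocks are incomparable. An ideal is a down-closed subset; $\langle A\rangle$ denotes the smallest ideal containing $A$. For $x,y\in\mathbb{Z}_q^{ms}$, $d_{RT}(x,y)=|\langle\{i:x_i\neq y_i\}\rangle|$. A code $C\subseteq \mathbb{Z}_q^{ms}$ is an $R$-covering if every $x\in\mathbb{Z}_q^{ms}$ has some $c\in C$ with $d_{RT}(x,c)\le R$; $K_q^{RT}(m,s,R)$ is the smallest size of an $R$-covering. *)

theory Defs
  imports Main
begin

text \<open>RT poset [m x s], 0-indexed: positions 0..<m*s, block of position i is i div s,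
  each block is a chain ordered as the integers; different blocks incomparable.\<close>

definition rt_le :: "nat \<Rightarrow> nat \<Rightarrow> nat \<Rightarrow> bool" where
  "rt_le s i j \<longleftrightarrow> i div s = j div s \<and> i \<le> j"

definition rt_ideal :: "nat \<Rightarrow> nat \<Rightarrow> nat set \<Rightarrow> nat set" where
  "rt_ideal m s A = {j. j < m * s \<and> (\<exists>i\<in>A. rt_le s j i)}"

definition rt_space :: "nat \<Rightarrow> nat \<Rightarrow> nat \<Rightarrow> (nat \<Rightarrow> nat) set" where
  "rt_space q m s = {x. (\<forall>i < m * s. x i < q) \<and> (\<forall>i \<ge> m * s. x i = 0)}"

definition d_RT :: "nat \<Rightarrow> nat \<Rightarrow> (nat \<Rightarrow> nat) \<Rightarrow> (nat \<Rightarrow> nat) \<Rightarrow> nat" where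
  "d_RT m s x y = card (rt_ideal m s {i. i < m * s \<and> x i \<noteq> y i})"

definition is_covering :: "nat \<Rightarrow> nat \<Rightarrow> nat \<Rightarrow> nat \<Rightarrow> (nat \<Rightarrow> nat) set \<Rightarrow> bool" where
  "is_covering q m s R C \<longleftrightarrow> C \<subseteq> rt_space q m s \<and>
     (\<forall>x\<in>rt_space q m s. \<exists>c\<in>C. d_RT m s x c \<le> R)"

definition K_RT :: "nat \<Rightarrow> nat \<Rightarrow> nat \<Rightarrow> nat \<Rightarrow> nat" where
  "K_RT q m s R = (LEAST k. \<exists>C. is_covering q m s R C \<and> finite C \<and> card C = k)"

end

theory Submission
  imports Defs
begin

definition cw :: "nat \<Rightarrow> nat \<Rightarrow> nat \<Rightarrow> nat \<Rightarrow> nat \<Rightarrow> nat" where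
  "cw s a b c = (\<lambda>i. if i = s - 1 then a else if i = 2*s - 1 then b
       else if i = 3*s - 1 then c else 0)"

lemma end_not_in_ideal:
  assumes s: "0 < s" and k: "k < 3" and eq: "x (k*s + (s-1)) = y (k*s + (s-1))"
  shows "k*s + (s-1) \<notin> rt_ideal 3 s {i. i < 3 * s \<and> x i \<noteq> y i}"
proof
  assume "k*s + (s-1) \<in> rt_ideal 3 s {i. i < 3 * s \<and> x i \<noteq> y i}"
  then obtain i where i: "i < 3*s" "x i \<noteq> y i" "(k*s+(s-1)) div s = i div s" "k*s+(s-1) \<le> i"
    unfolding rt_ideal_def rt_le_def by auto
  have "(k*s+(s-1)) div s = k" using s
    by (metis add.commute add_0 diff_less div_less div_mult_self1 less_one less_not_refl2 not_gr_zero)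
  hence "i div s = k" using i by simp
  hence "i < (k+1)*s" using s by (metis add.commute div_less_iff_less_mult mult.commute plus_1_eq_Suc lessI)
  hence "i = k*s+(s-1)" using i(4) s by (simp add: algebra_simps)
  thus False using i(2) eq by simp
qed

lemma dist_bound:
  assumes s: "0 < s" and k: "k1 < 3" "k2 < 3" "k1 \<noteq> k2"
    and e1: "x (k1*s + (s-1)) = y (k1*s + (s-1))"
    and e2: "x (k2*s + (s-1)) = y (k2*s + (s-1))"
  shows "d_RT 3 s x y \<le> 3 * s - 2"
proof -
  let ?I = "rt_ideal 3 s {i. i < 3 * s \<and> x i \<noteq> y i}"
  have sub: "?I \<subseteq> {0..<3*s} - {k1*s + (s-1), k2*s + (s-1)}"
    using end_not_in_ideal[of s k1 x y, OF s k(1) e1] end_not_in_ideal[of s k2 x y, OF s k(2) e2]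
    unfolding rt_ideal_def by auto
  have "k1*s \<noteq> k2*s" using k s by simp
  hence ne: "k1*s + (s-1) \<noteq> k2*s + (s-1)" by (metis add_right_cancel)
  have l1: "k1*s + (s-1) < 3*s"
  proof -
    have "k1*s \<le> 2*s" using k by simp
    thus ?thesis using s by linarith
  qed
  have l2: "k2*s + (s-1) < 3*s"
  proof -
    have "k2*s \<le> 2*s" using k by simp
    thus ?thesis using s by linarith
  qed
  have "card ?I \<le> card ({0..<3*s} - {k1*s + (s-1), k2*s + (s-1)})"
    by (rule card_mono[OF _ sub]) simp
  also have "\<dots> = 3*s - 2" using ne l1 l2 by (simp add: card_Diff_subset)
  finally show ?thesis unfolding d_RT_def .
qed

lemma code_cover:
  assumes "a < (3::nat)" "b < (3::nat)" "c < (3::nat)"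
  shows "\<exists>p q r. (p,q,r)\<in>{(0,0,0),(0,1,1),(1,0,1),(1,1,0),(2,2,2)} \<and> (
     (a=p \<and> b=q) \<or> (a=p \<and> c=r) \<or> (b=q \<and> c=r))"
proof -
  have "a \<in> {0,1,2}" "b \<in> {0,1,2}" "c \<in> {0,1,2::nat}" using assms by auto
  thus ?thesis by auto
qed

theorem corollary4:
  fixes s :: nat
  assumes "0 < s"
  shows "K_RT 3 3 s (3 * s - 2) \<le> 5"
proof -
  let ?T = "{(0,0,0),(0,1,1),(1,0,1),(1,1,0),(2,2,2::nat)}"
  define C where "C = (\<lambda>(p,q,r). cw s p q r) ` ?T"
  have d1: "s - 1 \<noteq> 2*s - 1" "s - 1 \<noteq> 3*s - 1" "2*s - 1 \<noteq> 3*s - 1" using assms by auto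
  have ev: "cw s p q r (s-1) = p" "cw s p q r (2*s-1) = q" "cw s p q r (3*s-1) = r" for p q r
    using d1 unfolding cw_def by auto
  have inj: "inj_on (\<lambda>(p,q,r). cw s p q r) ?T"
  proof (rule inj_onI)
    fix u v assume "u \<in> ?T" "v \<in> ?T" and h: "(\<lambda>(p,q,r). cw s p q r) u = (\<lambda>(p,q,r). cw s p q r) v"
    obtain p q r where u: "u = (p,q,r)" by (cases u) auto
    obtain p' q' r' where v: "v = (p',q',r')" by (cases v) auto
    have h2: "cw s p q r = cw s p' q' r'" using h u v by simp
    have "p = p'" using fun_cong[OF h2, of "s-1"] ev by simp
    moreover have "q = q'" using fun_cong[OF h2, of "2*s-1"] ev by simp
    moreover have "r = r'" using fun_cong[OF h2, of "3*s-1"] ev by simp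
    ultimately show "u = v" using u v by simp
  qed
  have cardC: "card C = 5" unfolding C_def using card_image[OF inj] by simp
  have sub: "C \<subseteq> rt_space 3 3 s"
  proof
    fix w assume "w \<in> C"
    then obtain p q r where "(p,q,r) \<in> ?T" "w = cw s p q r" unfolding C_def by auto
    moreover have "3*s - 1 < 3*s" using assms by simp
    ultimately show "w \<in> rt_space 3 3 s" unfolding rt_space_def cw_def using assms by auto
  qed
  have cov: "\<exists>c\<in>C. d_RT 3 s x c \<le> 3*s - 2" if x: "x \<in> rt_space 3 3 s" for x
  proof -
    have lt: "s - 1 < 3*s" "2*s - 1 < 3*s" "3*s - 1 < 3*s" using assms by auto
    have "x (s-1) < 3" "x (2*s-1) < 3" "x (3*s-1) < 3" using x lt unfolding rt_space_def by auto
    from code_cover[OF this] obtain p q r where pqr: "(p,q,r) \<in> ?T"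
      "(x (s-1) = p \<and> x (2*s-1) = q) \<or> (x (s-1) = p \<and> x (3*s-1) = r) \<or>
       (x (2*s-1) = q \<and> x (3*s-1) = r)" by (elim exE conjE) blast
    let ?c = "cw s p q r"
    have cC: "?c \<in> C" unfolding C_def using pqr(1) by force
    have e0: "0*s + (s-1) = s - 1" and e1: "1*s + (s-1) = 2*s - 1" and e2: "2*s + (s-1) = 3*s - 1"
      using assms by auto
    have "d_RT 3 s x ?c \<le> 3*s - 2"
      using pqr(2)
    proof (elim disjE conjE)
      assume "x (s-1) = p" "x (2*s-1) = q"
      then show ?thesis by (intro dist_bound[OF assms, of 0 1 x ?c, unfolded e0 e1]) (simp_all add: ev[simplified])
    next
      assume "x (s-1) = p" "x (3*s-1) = r"
      then show ?thesis by (intro dist_bound[OF assms, of 0 2 x ?c, unfolded e0 e2]) (simp_all add: ev[simplified])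
    next
      assume "x (2*s-1) = q" "x (3*s-1) = r"
      then show ?thesis by (intro dist_bound[OF assms, of 1 2 x ?c, unfolded e1 e2]) (simp_all add: ev[simplified])
    qed
    with cC show ?thesis by blast
  qed
  have "is_covering 3 3 s (3*s - 2) C" unfolding is_covering_def using sub cov by blast
  moreover have "finite C" unfolding C_def by simp
  ultimately have "\<exists>C. is_covering 3 3 s (3*s - 2) C \<and> finite C \<and> card C = 5" using cardC by blast
  then show ?thesis unfolding K_RT_def by (rule Least_le)
qed

end
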